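(* Let $f: (\mathbb{R}^{+})^n \to (\mathbb{R}^{+})^n$ be homogeneous and monotone such that $\mathcal{G}(f)$ is strongly connected. Then for every $\lambda \in \mathbb{R}^{+}$ the super-eigenspace $S^\lambda(f) = \{x \in (\mathbb{R}^{+})^n : f(x) \le \lambda x\}$ is bounded in the Hilbert projective metric.
   Context: Homogeneous: $f(\lambda x) = \lambda f(x)$ for all $\lambda > 0$; monotone: $x \le y$ componentwise implies $f(x) \le f(y)$. For $u > 0$ and $J \subseteq \{1,\dots,n\}$, $u_J$ is the vector with entries $u$ on $J$ and $1$ off $J$. $\mathcal{G}(f)$ is the directed graph on $\{1,\dots,n\}$ with an edge $i \to j$ iff $\lim_{u\to\infty} f_i(u_{\{j\}}) = \infty$. Hilbert projective metric: $d_H(y,z) = \max_i \log(y_i/z_i) - \min_i \log(y_i/z_i)$; a set $A$ is bounded if $\sup_{y,z\in A} d_H(y,z) < \infty$ (the empty set is bounded). *)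

theory Defs
  imports "HOL-Analysis.Analysis"
begin

definition pos_vec :: "real^'n \<Rightarrow> bool" where
  "pos_vec x \<longleftrightarrow> (\<forall>i. x $ i > 0)"

definition homogeneous_pos :: "(real^'n \<Rightarrow> real^'n) \<Rightarrow> bool" where
  "homogeneous_pos f \<longleftrightarrow>
     (\<forall>x l. pos_vec x \<longrightarrow> l > 0 \<longrightarrow> f (l *\<^sub>R x) = l *\<^sub>R f x)"

definition monotone_pos :: "(real^'n \<Rightarrow> real^'n) \<Rightarrow> bool" where
  "monotone_pos f \<longleftrightarrow>
     (\<forall>x y. pos_vec x \<longrightarrow> pos_vec y \<longrightarrow> (\<forall>i. x $ i \<le> y $ i) \<longrightarrow>
        (\<forall>i. f x $ i \<le> f y $ i))"

definition uvec :: "real \<Rightarrow> 'n set \<Rightarrow> real^'n" where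
  "uvec u J = (\<chi> i. if i \<in> J then u else 1)"

definition graph_of :: "(real^'n \<Rightarrow> real^'n) \<Rightarrow> ('n \<times> 'n) set" where
  "graph_of f = {(i, j). filterlim (\<lambda>u. f (uvec u {j}) $ i) at_top at_top}"

definition strongly_connected_rel :: "('n \<times> 'n) set \<Rightarrow> bool" where
  "strongly_connected_rel E \<longleftrightarrow> (\<forall>i j. (i, j) \<in> E\<^sup>*)"

definition hilbert_dist :: "real^'n::finite \<Rightarrow> real^'n \<Rightarrow> real" where
  "hilbert_dist y z =
     Max (range (\<lambda>i. ln (y $ i / z $ i))) - Min (range (\<lambda>i. ln (y $ i / z $ i)))"

definition hilbert_bounded :: "(real^'n::finite) set \<Rightarrow> bool" where
  "hilbert_bounded A \<longleftrightarrow> (\<exists>C. \<forall>y\<in>A. \<forall>z\<in>A. hilbert_dist y z \<le> C)"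

definition super_eigenspace :: "(real^'n \<Rightarrow> real^'n) \<Rightarrow> real \<Rightarrow> (real^'n) set" where
  "super_eigenspace f l = {x. pos_vec x \<and> (\<forall>i. f x $ i \<le> l * x $ i)}"

end

theory Submission
  imports Defs
begin

definition Pr :: "(real^'n \<Rightarrow> real^'n) \<Rightarrow> real \<Rightarrow> 'n \<Rightarrow> 'n \<Rightarrow> bool" where
  "Pr f l a b \<longleftrightarrow> (\<forall>K. \<exists>B\<ge>1. \<forall>x\<in>super_eigenspace f l. \<forall>t>0.
      (\<forall>k. t \<le> x $ k) \<longrightarrow> x $ a \<le> K * t \<longrightarrow> x $ b \<le> B * t)"

lemma Pr_refl: "Pr f l a a"
  unfolding Pr_def
proof
  fix K show "\<exists>B\<ge>1. \<forall>x\<in>super_eigenspace f l. \<forall>t>0.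
      (\<forall>k. t \<le> x $ k) \<longrightarrow> x $ a \<le> K * t \<longrightarrow> x $ a \<le> B * t"
    apply (rule exI[of _ "max K 1"])
    by (auto intro: order.trans[OF _ mult_right_mono])
qed

lemma Pr_trans: "Pr f l a b \<Longrightarrow> Pr f l b c \<Longrightarrow> Pr f l a c"
  unfolding Pr_def
proof
  fix K
  assume h1: "\<forall>K. \<exists>B\<ge>1. \<forall>x\<in>super_eigenspace f l. \<forall>t>0.
      (\<forall>k. t \<le> x $ k) \<longrightarrow> x $ a \<le> K * t \<longrightarrow> x $ b \<le> B * t"
    and h2: "\<forall>K. \<exists>B\<ge>1. \<forall>x\<in>super_eigenspace f l. \<forall>t>0.
      (\<forall>k. t \<le> x $ k) \<longrightarrow> x $ b \<le> K * t \<longrightarrow> x $ c \<le> B * t"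
  obtain B1 where B1: "B1 \<ge> 1" "\<forall>x\<in>super_eigenspace f l. \<forall>t>0.
      (\<forall>k. t \<le> x $ k) \<longrightarrow> x $ a \<le> K * t \<longrightarrow> x $ b \<le> B1 * t" using h1 by blast
  obtain B2 where B2: "B2 \<ge> 1" "\<forall>x\<in>super_eigenspace f l. \<forall>t>0.
      (\<forall>k. t \<le> x $ k) \<longrightarrow> x $ b \<le> B1 * t \<longrightarrow> x $ c \<le> B2 * t" using h2 by blast
  show "\<exists>B\<ge>1. \<forall>x\<in>super_eigenspace f l. \<forall>t>0.
      (\<forall>k. t \<le> x $ k) \<longrightarrow> x $ a \<le> K * t \<longrightarrow> x $ c \<le> B * t"
    using B1 B2 by blast
qed

lemma Pr_edge:
  assumes pos: "\<And>x. pos_vec x \<Longrightarrow> pos_vec (f x)"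
    and hom: "homogeneous_pos f"
    and mon: "monotone_pos f"
    and l: "l > 0"
    and e: "(a, b) \<in> graph_of f"
  shows "Pr f l a b"
  unfolding Pr_def
proof
  fix K
  have lim: "filterlim (\<lambda>u. f (uvec u {b}) $ a) at_top at_top"
    using e unfolding graph_of_def by simp
  have "eventually (\<lambda>u. l * K + 1 \<le> f (uvec u {b}) $ a) at_top"
    using lim unfolding filterlim_at_top by blast
  then obtain N where N: "\<And>u. u \<ge> N \<Longrightarrow> l * K + 1 \<le> f (uvec u {b}) $ a"
    unfolding eventually_at_top_linorder by blast
  show "\<exists>B\<ge>1. \<forall>x\<in>super_eigenspace f l. \<forall>t>0.
      (\<forall>k. t \<le> x $ k) \<longrightarrow> x $ a \<le> K * t \<longrightarrow> x $ b \<le> B * t"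
  proof (rule exI[of _ "max N 1"], intro conjI ballI allI impI)
    fix x t assume xS: "x \<in> super_eigenspace f l" and t: "t > 0"
      and tk: "\<forall>k. t \<le> x $ k" and xa: "x $ a \<le> K * t"
    show "x $ b \<le> max N 1 * t"
    proof (rule ccontr)
      assume "\<not> x $ b \<le> max N 1 * t"
      hence xb: "x $ b > max N 1 * t" by simp
      define u where "u = x $ b / t"
      have "N * t \<le> max N 1 * t" "1 * t \<le> max N 1 * t" using t by (simp_all add: mult_right_mono)
      hence "N * t \<le> x $ b" "t < x $ b" using xb by linarith+
      hence uN: "u \<ge> N" and u1: "u > 0" using t unfolding u_def
        by (simp_all add: le_divide_eq)
      have pu: "pos_vec (uvec u {b})" using u1 unfolding pos_vec_def uvec_def by simp
      have ptu: "pos_vec (t *\<^sub>R uvec u {b})" using u1 t unfolding pos_vec_def uvec_def by simp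
      have px: "pos_vec x" using xS unfolding super_eigenspace_def by simp
      have le: "\<forall>i. (t *\<^sub>R uvec u {b}) $ i \<le> x $ i"
        using tk t unfolding uvec_def u_def by auto
      have "f (t *\<^sub>R uvec u {b}) $ a \<le> f x $ a"
        using mon ptu px le unfolding monotone_pos_def by blast
      moreover have "f (t *\<^sub>R uvec u {b}) = t *\<^sub>R f (uvec u {b})"
        using hom pu t unfolding homogeneous_pos_def by blast
      ultimately have "t * f (uvec u {b}) $ a \<le> f x $ a" by simp
      moreover have "t * (l * K + 1) \<le> t * f (uvec u {b}) $ a"
        using N[OF uN] t by simp
      moreover have "f x $ a \<le> l * x $ a" using xS unfolding super_eigenspace_def by simp
      moreover have "l * x $ a \<le> l * (K * t)" using xa l by simp
      ultimately show False using t by (simp add: algebra_simps)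
    qed
  qed simp
qed

lemma Pr_all:
  assumes "\<And>x. pos_vec x \<Longrightarrow> pos_vec (f x)"
    and "homogeneous_pos f"
    and "monotone_pos f"
    and "l > 0"
    and "(a, b) \<in> (graph_of f)\<^sup>*"
  shows "Pr f l a b"
  using assms(5)
proof (induction rule: rtrancl_induct)
  case base then show ?case by (rule Pr_refl)
next
  case (step y z)
  then show ?case using Pr_trans Pr_edge[OF assms(1-4)] by blast
qed

theorem theorem4:
  fixes f :: "real^'n::finite \<Rightarrow> real^'n" and l :: real
  assumes "\<And>x. pos_vec x \<Longrightarrow> pos_vec (f x)"
    and "homogeneous_pos f"
    and "monotone_pos f"
    and "strongly_connected_rel (graph_of f)"
    and "l > 0"
  shows "hilbert_bounded (super_eigenspace f l)"
proof -
  have "\<forall>i j. \<exists>B\<ge>1. \<forall>x\<in>super_eigenspace f l. \<forall>t>0.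
      (\<forall>k. t \<le> x $ k) \<longrightarrow> x $ i \<le> 1 * t \<longrightarrow> x $ j \<le> B * t"
    using Pr_all[OF assms(1-3,5)] assms(4) unfolding strongly_connected_rel_def Pr_def
    by blast
  then obtain B where B0: "\<forall>i j. B i j \<ge> 1 \<and> (\<forall>x\<in>super_eigenspace f l. \<forall>t>0.
      (\<forall>k. t \<le> x $ k) \<longrightarrow> x $ i \<le> 1 * t \<longrightarrow> x $ j \<le> B i j * t)"
    by metis
  have B: "\<And>i j. B i j \<ge> 1" "\<And>i j x t. x\<in>super_eigenspace f l \<Longrightarrow> t > 0 \<Longrightarrow>
      (\<forall>k. t \<le> x $ k) \<Longrightarrow> x $ i \<le> t \<Longrightarrow> x $ j \<le> B i j * t"
    using B0 by auto
  define Bt where "Bt = Max (range (\<lambda>p. B (fst p) (snd p)))"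
  have Btge: "B i j \<le> Bt" for i j
    unfolding Bt_def by (rule Max_ge) (auto intro: image_eqI[of _ _ "(i,j)"])
  have Bt1: "Bt \<ge> 1" using Btge B(1) order.trans by blast
  have key: "\<exists>t>0. \<forall>k. t \<le> x $ k \<and> x $ k \<le> Bt * t" if xS: "x \<in> super_eigenspace f l" for x
  proof -
    have px: "\<forall>k. x $ k > 0" using xS unfolding super_eigenspace_def pos_vec_def by simp
    obtain i where i: "x $ i = Min (range (\<lambda>k. x $ k))"
    proof -
      have "Min (range (\<lambda>k. x $ k)) \<in> range (\<lambda>k. x $ k)"
        by (rule Min_in) auto
      then obtain j where "Min (range (\<lambda>k. x $ k)) = x $ j" by blast
      then show ?thesis using that by metis
    qed
    have mi: "\<forall>k. x $ i \<le> x $ k" using i by simp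
    have "x $ k \<le> Bt * x $ i" for k
    proof -
      have "x $ k \<le> B i k * x $ i" using B(2)[of x "x $ i" i k] xS px mi by simp
      also have "\<dots> \<le> Bt * x $ i" using Btge[of i k] px by (simp add: mult_right_mono less_imp_le)
      finally show ?thesis .
    qed
    then show ?thesis using mi px by blast
  qed
  show ?thesis unfolding hilbert_bounded_def
  proof (rule exI[of _ "2 * ln Bt"], intro ballI)
    fix y z assume yS: "y \<in> super_eigenspace f l" and zS: "z \<in> super_eigenspace f l"
    obtain ty where ty: "ty > 0" "\<forall>k. ty \<le> y $ k \<and> y $ k \<le> Bt * ty" using key[OF yS] by blast
    obtain tz where tz: "tz > 0" "\<forall>k. tz \<le> z $ k \<and> z $ k \<le> Bt * tz" using key[OF zS] by blast
    have pair: "ln (y $ i / z $ i) - ln (y $ k / z $ k) \<le> 2 * ln Bt" for i k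
    proof -
      have p: "y $ i > 0" "z $ i > 0" "y $ k > 0" "z $ k > 0"
        using ty tz by (meson less_le_trans)+
      have e: "ln (y $ i / z $ i) - ln (y $ k / z $ k) = ln (y $ i) - ln (z $ i) - ln (y $ k) + ln (z $ k)"
        using p by (simp add: ln_div)
      have "ln (y $ i) \<le> ln (Bt * ty)" using p ty Bt1 by simp
      moreover have "ln (z $ k) \<le> ln (Bt * tz)" using p tz Bt1 by simp
      moreover have "ln ty \<le> ln (y $ k)" using p ty Bt1 by simp
      moreover have "ln tz \<le> ln (z $ i)" using p tz Bt1 by simp
      moreover have "ln (Bt * ty) = ln Bt + ln ty" using Bt1 ty by (simp add: ln_mult)
      moreover have "ln (Bt * tz) = ln Bt + ln tz" using Bt1 tz by (simp add: ln_mult)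
      ultimately show ?thesis unfolding e by linarith
    qed
    obtain i where i: "ln (y $ i / z $ i) = Max (range (\<lambda>i. ln (y $ i / z $ i)))"
    proof -
      have "Max (range (\<lambda>i. ln (y $ i / z $ i))) \<in> range (\<lambda>i. ln (y $ i / z $ i))"
        by (rule Max_in) auto
      then obtain j where "Max (range (\<lambda>i. ln (y $ i / z $ i))) = ln (y $ j / z $ j)" by blast
      then show ?thesis using that by metis
    qed
    obtain k where k: "ln (y $ k / z $ k) = Min (range (\<lambda>i. ln (y $ i / z $ i)))"
    proof -
      have "Min (range (\<lambda>i. ln (y $ i / z $ i))) \<in> range (\<lambda>i. ln (y $ i / z $ i))"
        by (rule Min_in) auto
      then obtain j where "Min (range (\<lambda>i. ln (y $ i / z $ i))) = ln (y $ j / z $ j)" by blast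
      then show ?thesis using that by metis
    qed
    show "hilbert_dist y z \<le> 2 * ln Bt"
      unfolding hilbert_dist_def using pair[of i k] i k by simp
  qed
qed

end
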